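(* For all integers $m,n\ge 2$, $\chi_{ei}(P_m\square P_n)=2$.
   Context: All graphs are finite and simple. $P_k$ denotes the path on $k$ vertices. A path $P_4$ in $G$ is a sequence $uxyv$ of four distinct vertices with $ux,xy,yv\in E(G)$; $u,v$ are its end vertices. An $e$-injective $k$-coloring of $G$ is a function $f:V(G)\to\{1,\dots,k\}$ with $f(u)\ne f(v)$ whenever $u,v$ are the end vertices of some path $P_4$ in $G$; $\chi_{ei}(G)$ is the least such $k$. In the Cartesian product $G\square H$ (vertex set $V(G)\times V(H)$) two vertices are adjacent if they are adjacent in one coordinate and equal in the other. *)

theory Defs
  imports Main
begin

text \<open>A simple graph is given by a vertex set V and a symmetric irreflexive
adjacency relation adj (only used on V).\<close>

definition path_adj :: "nat \<Rightarrow> nat \<Rightarrow> nat \<Rightarrow> bool" where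
  "path_adj k i j \<longleftrightarrow> i < k \<and> j < k \<and> (i + 1 = j \<or> j + 1 = i)"

definition path_verts :: "nat \<Rightarrow> nat set" where
  "path_verts k = {0..<k}"

definition cart_adj :: "('a \<Rightarrow> 'a \<Rightarrow> bool) \<Rightarrow> ('b \<Rightarrow> 'b \<Rightarrow> bool)
    \<Rightarrow> 'a \<times> 'b \<Rightarrow> 'a \<times> 'b \<Rightarrow> bool" where
  "cart_adj adjG adjH p q \<longleftrightarrow>
     (adjG (fst p) (fst q) \<and> snd p = snd q) \<or> (fst p = fst q \<and> adjH (snd p) (snd q))"

definition P4_ends :: "'a set \<Rightarrow> ('a \<Rightarrow> 'a \<Rightarrow> bool) \<Rightarrow> 'a \<Rightarrow> 'a \<Rightarrow> bool" where
  "P4_ends V adj u v \<longleftrightarrow> (\<exists>x y. u \<in> V \<and> x \<in> V \<and> y \<in> V \<and> v \<in> V \<and>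
      distinct [u, x, y, v] \<and> adj u x \<and> adj x y \<and> adj y v)"

definition e_injective_coloring :: "'a set \<Rightarrow> ('a \<Rightarrow> 'a \<Rightarrow> bool) \<Rightarrow> nat \<Rightarrow> ('a \<Rightarrow> nat) \<Rightarrow> bool" where
  "e_injective_coloring V adj k f \<longleftrightarrow>
     (\<forall>x\<in>V. f x \<in> {1..k}) \<and> (\<forall>u v. P4_ends V adj u v \<longrightarrow> f u \<noteq> f v)"

definition chi_ei :: "'a set \<Rightarrow> ('a \<Rightarrow> 'a \<Rightarrow> bool) \<Rightarrow> nat" where
  "chi_ei V adj = (LEAST k. \<exists>f. e_injective_coloring V adj k f)"

end

theory Submission
  imports Defs
begin

lemma adj_par:
  assumes "cart_adj (path_adj m) (path_adj n) p q"
  shows "odd (fst p + snd p + fst q + snd q)"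
  using assms unfolding cart_adj_def path_adj_def
  by (cases p, cases q) auto

lemma col2:
  "e_injective_coloring (path_verts m \<times> path_verts n) (cart_adj (path_adj m) (path_adj n)) 2
     (\<lambda>p. (fst p + snd p) mod 2 + 1)"
  unfolding e_injective_coloring_def
proof (intro conjI allI impI ballI)
  fix x :: "nat \<times> nat"
  show "(fst x + snd x) mod 2 + 1 \<in> {1..2}" by auto
next
  fix u v :: "nat \<times> nat"
  assume "P4_ends (path_verts m \<times> path_verts n) (cart_adj (path_adj m) (path_adj n)) u v"
  then obtain x y where a: "cart_adj (path_adj m) (path_adj n) u x"
    "cart_adj (path_adj m) (path_adj n) x y" "cart_adj (path_adj m) (path_adj n) y v"
    unfolding P4_ends_def by blast
  have "odd (fst u + snd u + fst x + snd x)" "odd (fst x + snd x + fst y + snd y)"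
    "odd (fst y + snd y + fst v + snd v)" using adj_par a by blast+
  then show "(fst u + snd u) mod 2 + 1 \<noteq> (fst v + snd v) mod 2 + 1" by presburger
qed

theorem theorem4p2:
  fixes m n :: nat
  assumes "m \<ge> 2" and "n \<ge> 2"
  shows "chi_ei (path_verts m \<times> path_verts n) (cart_adj (path_adj m) (path_adj n)) = 2"
  unfolding chi_ei_def
proof (rule Least_equality)
  show "\<exists>f. e_injective_coloring (path_verts m \<times> path_verts n) (cart_adj (path_adj m) (path_adj n)) 2 f"
    using col2 by blast
next
  fix k
  assume "\<exists>f. e_injective_coloring (path_verts m \<times> path_verts n) (cart_adj (path_adj m) (path_adj n)) k f"
  then obtain f where f: "e_injective_coloring (path_verts m \<times> path_verts n) (cart_adj (path_adj m) (path_adj n)) k f"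
    by blast
  have V: "(0,0) \<in> path_verts m \<times> path_verts n" "(1,0) \<in> path_verts m \<times> path_verts n"
    "(1,1) \<in> path_verts m \<times> path_verts n" "(0,1) \<in> path_verts m \<times> path_verts n"
    using assms by (auto simp: path_verts_def)
  have P: "P4_ends (path_verts m \<times> path_verts n) (cart_adj (path_adj m) (path_adj n)) (0,0) (0,1)"
    unfolding P4_ends_def
    apply (rule exI[of _ "(1,0)"], rule exI[of _ "(1,1)"])
    using V assms by (auto simp: cart_adj_def path_adj_def)
  have "f (0,0) \<noteq> f (0,1)" using f P unfolding e_injective_coloring_def by blast
  moreover have "f (0,0) \<in> {1..k}" "f (0,1) \<in> {1..k}"
    using f V unfolding e_injective_coloring_def by blast+
  ultimately show "2 \<le> k" by auto
qed

end
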